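(* For $q\ge1$, let a $q$-prime factor be a word $0^a1^b$ with $b\ge0$ and $a=\lfloor b/q\rfloor+1$. The bivariate generating function $S_q(x,y)=\sum_{n,k\ge0}s_{n,k}x^ny^k$, where $s_{n,k}$ is the number of $q$-prime factors of length $n$ having exactly $k$ letters $1$, is $$S_q(x,y)=\frac{x\left(1-(xy)^q\right)}{(xy-1)(x^{q+1}y^q-1)}.$$
   Context: Exponents denote repetition of letters: $0^a1^b$ is $a$ zeros followed by $b$ ones. *)

theory Defs
  imports "HOL-Computational_Algebra.Formal_Power_Series"
begin

text \<open>Words over the alphabet {0,1} are lists of bool; False = letter 0, True = letter 1.\<close>

definition q_prime_factor :: "nat \<Rightarrow> bool list \<Rightarrow> bool" where
  "q_prime_factor q w \<longleftrightarrow>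
     (\<exists>a b. w = replicate a False @ replicate b True \<and> a = b div q + 1)"

definition num_ones :: "bool list \<Rightarrow> nat" where
  "num_ones w = length (filter (\<lambda>c. c) w)"

definition s_count :: "nat \<Rightarrow> nat \<Rightarrow> nat \<Rightarrow> nat" where
  "s_count q n k = card {w. q_prime_factor q w \<and> length w = n \<and> num_ones w = k}"

text \<open>Bivariate generating function as a power series in x whose coefficients are
  power series in y: coefficient of x^n y^k is s_count q n k.\<close>
definition S_gf :: "nat \<Rightarrow> rat fps fps" where
  "S_gf q = Abs_fps (\<lambda>n. Abs_fps (\<lambda>k. of_nat (s_count q n k)))"

definition X_var :: "rat fps fps" where "X_var = fps_X"
definition Y_var :: "rat fps fps" where "Y_var = fps_const fps_X"

end

theory Submission
  imports Defs
begin

unbundle fps_syntax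

lemma count_words:
  assumes "q \<ge> 1"
  shows "s_count q n k = (if n = k + k div q + 1 then 1 else 0)"
proof -
  have "{w. q_prime_factor q w \<and> length w = n \<and> num_ones w = k} =
        (if n = k + k div q + 1 then {replicate (k div q + 1) False @ replicate k True} else {})"
    by (auto simp: q_prime_factor_def num_ones_def filter_replicate)
  then show ?thesis by (simp add: s_count_def)
qed

lemma S_nth: "q \<ge> 1 \<Longrightarrow> S_gf q $ n $ k = (if n = k + k div q + 1 then 1 else 0)"
  by (simp add: S_gf_def count_words)

lemma term_nth:
  "(X_var * (X_var ^ r * Y_var ^ r)) $ n $ k = (if n = r + 1 \<and> k = r then 1 else 0)"
proof -
  have e: "X_var * (X_var ^ r * Y_var ^ r) = fps_X ^ (r+1) * fps_const (fps_X ^ r)"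
    by (simp add: X_var_def Y_var_def mult.assoc)
  have "(fps_X ^ (r+1) * fps_const (fps_X ^ r)) $ n = (if n = r + 1 then fps_X ^ r else (0::rat fps))"
    by (auto simp: fps_X_power_mult_nth)
  then show ?thesis unfolding e by (simp add: fps_X_power_nth)
qed

lemma XG_nth:
  "(X_var * (\<Sum>r<q. X_var ^ r * Y_var ^ r)) $ n $ k = (if k < q \<and> n = k + 1 then 1 else 0)"
proof -
  have "(X_var * (\<Sum>r<q. X_var ^ r * Y_var ^ r)) $ n $ k
      = (\<Sum>r<q. (X_var * (X_var ^ r * Y_var ^ r)) $ n $ k)"
    by (simp add: sum_distrib_left fps_sum_nth)
  also have "\<dots> = (\<Sum>r<q. (if n = r + 1 \<and> k = r then 1 else 0))"
    by (simp only: term_nth)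
  also have "\<dots> = (if k < q \<and> n = k + 1 then 1 else 0)"
  proof -
    have "(\<Sum>r<q. (if n = r + 1 \<and> k = r then 1 else 0)) = (\<Sum>r<q. (if k = r then (if n = k + 1 then 1 else 0) else (0::rat)))"
      by (rule sum.cong) auto
    then show ?thesis by simp
  qed
  finally show ?thesis .
qed

lemma PS_nth:
  "(X_var ^ (q+1) * Y_var ^ q * F) $ n $ k =
     (if n \<ge> q+1 \<and> k \<ge> q then F $ (n-q-1) $ (k-q) else 0)"
proof -
  have e: "X_var ^ (q+1) * Y_var ^ q * F = fps_X ^ (q+1) * (fps_const (fps_X ^ q) * F)"
    by (simp add: X_var_def Y_var_def mult.assoc)
  have "(fps_X ^ (q+1) * (fps_const (fps_X ^ q) * F)) $ n =
      (if n \<ge> q+1 then fps_X ^ q * F $ (n-q-1) else 0)"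
    unfolding fps_X_power_mult_nth by auto
  then show ?thesis unfolding e by (auto simp: fps_X_power_mult_nth)
qed

lemma arith_key:
  assumes "(q::nat) \<ge> 1"
  shows "(if n = k + k div q + 1 then 1 else 0) =
    (if k < q \<and> n = k + 1 then 1 else 0) +
    (if n \<ge> q+1 \<and> k \<ge> q then (if n-q-1 = (k-q) + (k-q) div q + 1 then 1 else 0) else (0::rat))"
proof (cases "k < q")
  case True
  then show ?thesis by auto
next
  case False
  then have "k div q = Suc ((k-q) div q)" using assms le_div_geq by auto
  then show ?thesis using False by auto
qed

lemma rec_eq_nth:
  assumes "q \<ge> 1"
  shows "S_gf q $ n $ k = (X_var * (\<Sum>r<q. X_var ^ r * Y_var ^ r) + X_var ^ (q+1) * Y_var ^ q * S_gf q) $ n $ k"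
      unfolding fps_add_nth XG_nth PS_nth S_nth[OF assms] 
      using arith_key[OF assms, of n k]
      by assumption

lemma rec_eq:
  assumes "q \<ge> 1"
  shows "S_gf q = X_var * (\<Sum>r<q. X_var ^ r * Y_var ^ r) + X_var ^ (q+1) * Y_var ^ q * S_gf q"
  by (intro fps_ext rec_eq_nth[OF assms])

theorem lemma2:
  fixes q :: nat
  assumes "q \<ge> 1"
  shows "S_gf q =
    X_var * (1 - (X_var * Y_var) ^ q)
      * inverse ((X_var * Y_var - 1) * (X_var ^ (q + 1) * Y_var ^ q - 1))"
proof -
  define D where "D = (X_var * Y_var - 1) * (X_var ^ (q + 1) * Y_var ^ q - 1)"
  define G where "G = (\<Sum>r<q. (X_var * Y_var) ^ r)"
  have G: "G = (\<Sum>r<q. X_var ^ r * Y_var ^ r)"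
    unfolding G_def by (simp add: power_mult_distrib)
  have D0: "D $ 0 = 1"
    unfolding D_def by (simp add: X_var_def Y_var_def)
  have Dinv: "D * inverse D = 1"
  proof -
    have i1: "inverse (1::rat fps) = 1" by simp
    show ?thesis
      using D0 fps_right_inverse[of D "inverse (D $ 0)"] i1 by (simp add: fps_inverse_def)
  qed
  have geo: "G * (X_var * Y_var - 1) = (X_var * Y_var) ^ q - 1"
    unfolding G_def by (simp add: power_diff_1_eq mult.commute)
  have "S_gf q * (1 - X_var ^ (q+1) * Y_var ^ q) = X_var * G"
    using rec_eq[OF assms] G by (simp add: algebra_simps)
  then have "S_gf q * D = X_var * (1 - (X_var * Y_var) ^ q)"
  proof -
    assume h: "S_gf q * (1 - X_var ^ (q+1) * Y_var ^ q) = X_var * G"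
    have "S_gf q * D = (S_gf q * (1 - X_var ^ (q+1) * Y_var ^ q)) * (1 - X_var * Y_var)"
      unfolding D_def by (simp add: algebra_simps)
    also have "\<dots> = X_var * (G * (1 - X_var * Y_var))" using h by (simp add: mult.assoc)
    also have "G * (1 - X_var * Y_var) = 1 - (X_var * Y_var) ^ q"
      using geo by (simp add: algebra_simps)
    finally show ?thesis .
  qed
  then have "S_gf q * D * inverse D = X_var * (1 - (X_var * Y_var) ^ q) * inverse D" by simp
  moreover have "S_gf q * D * inverse D = S_gf q"
    by (simp only: mult.assoc Dinv mult_1_right)
  ultimately have "S_gf q = X_var * (1 - (X_var * Y_var) ^ q) * inverse D" by (metis)
  then show ?thesis unfolding D_def .
qed

end
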